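(* Let $T$ be an interval exchange transformation of $[0,1)$. Then $C_\psi(T)\le\min(1,\tau(T))$. In particular, if $\tau(T)=0$ then $C_\psi(T)=0$.
   Context: An $r$-interval exchange transformation is given by a permutation $\pi$ of $\{1,\dots,r\}$ and lengths $\ell_i>0$ with $\sum\ell_i=1$: with $s_0=0$, $s_k=\sum_{i\le k}\ell_i$, $I_k=[s_{k-1},s_k)$, $T(x)=x-\sum_{i<k}\ell_i+\sum_{\pi(i')<\pi(k)}\ell_{i'}$ for $x\in I_k$. Let $\oplus,\ominus$ denote addition and subtraction modulo $1$ on $[0,1)$. Set $\Delta(T)=\{T(x)\ominus x: x\in[0,1)\}$ (a finite set), $\Delta'(T)=\{u\ominus v: u,v\in\Delta(T)\}$, $\Delta'_n(T)=\bigcup_{k=1}^n\Delta'(T^k)$, and the $\tau$-entropy $\tau(T)=\limsup_{n\to\infty}\frac{\log\operatorname{card}\Delta'_n(T)}{\log n}$. With $\lambda$ Lebesgue measure and $\|t\|$ the distance from $t$ to the nearest integer, $C_\psi(T)=\sup\big(\{0\}\cup\{\alpha>0:\liminf_n n^\alpha\|T^nx-T^ny\|=0\text{ for }\lambda\times\lambda\text{-a.e. }(x,y)\}\big)$. *)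

theory Defs
  imports "HOL-Analysis.Analysis" "HOL-Combinatorics.Permutations"
begin

definition iet_s :: "(nat \<Rightarrow> real) \<Rightarrow> nat \<Rightarrow> real" where
  "iet_s l k = (\<Sum>i\<in>{1..k}. l i)"

definition iet :: "nat \<Rightarrow> (nat \<Rightarrow> nat) \<Rightarrow> (nat \<Rightarrow> real) \<Rightarrow> real \<Rightarrow> real" where
  "iet r p l x =
     (let k = (THE k. k \<in> {1..r} \<and> iet_s l (k - 1) \<le> x \<and> x < iet_s l k)
      in x - iet_s l (k - 1) + (\<Sum>i'\<in>{i'\<in>{1..r}. p i' < p k}. l i'))"

definition msub :: "real \<Rightarrow> real \<Rightarrow> real" where
  "msub u v = frac (u - v)"

definition dnint :: "real \<Rightarrow> real" where
  "dnint t = \<bar>t - of_int (round t)\<bar>"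

definition Delta :: "(real \<Rightarrow> real) \<Rightarrow> real set" where
  "Delta T = {msub (T x) x | x. x \<in> {0..<1}}"

definition Delta' :: "(real \<Rightarrow> real) \<Rightarrow> real set" where
  "Delta' T = {msub u v | u v. u \<in> Delta T \<and> v \<in> Delta T}"

definition Delta'_n :: "(real \<Rightarrow> real) \<Rightarrow> nat \<Rightarrow> real set" where
  "Delta'_n T n = (\<Union>k\<in>{1..n}. Delta' (T ^^ k))"

definition tau_entropy :: "(real \<Rightarrow> real) \<Rightarrow> ereal" where
  "tau_entropy T = limsup (\<lambda>n. ereal (ln (real (card (Delta'_n T n))) / ln (real n)))"

definition C_psi :: "(real \<Rightarrow> real) \<Rightarrow> ereal" where
  "C_psi T = Sup ({0} \<union> ereal ` {\<alpha>::real. \<alpha> > 0 \<and>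
     (AE p in (restrict_space lborel {0..<1::real} \<Otimes>\<^sub>M restrict_space lborel {0..<1::real}).
        liminf (\<lambda>n. ereal (real n powr \<alpha> * dnint ((T ^^ n) (fst p) - (T ^^ n) (snd p)))) = 0)})"

end

theory Submission
  imports Defs
begin


lemma dnint_add_int: "dnint (t + of_int m) = dnint t"
proof -
  have "\<bar>t + of_int m - of_int (round (t + of_int m))\<bar> \<le> \<bar>t + of_int m - of_int (round t + m)\<bar>"
    by (rule round_diff_minimal)
  moreover have "\<bar>t - of_int (round t)\<bar> \<le> \<bar>t - of_int (round (t + of_int m) - m)\<bar>"
    by (rule round_diff_minimal)
  ultimately show ?thesis unfolding dnint_def by (simp add: algebra_simps)
qed

locale ietc =
  fixes r :: nat and p :: "nat \<Rightarrow> nat" and l :: "nat \<Rightarrow> real"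
  assumes r1: "r \<ge> 1" and perm: "p permutes {1..r}"
    and pos: "\<forall>i\<in>{1..r}. l i > 0" and sum1: "(\<Sum>i\<in>{1..r}. l i) = 1"
begin

abbreviation "s \<equiv> iet_s l"
definition "T = iet r p l"
definition "P x k \<longleftrightarrow> k \<in> {1..r} \<and> s (k-1) \<le> x \<and> x < s k"
definition "a k = (\<Sum>i'\<in>{i'\<in>{1..r}. p i' < p k}. l i')"
definition "g k = a k - s (k-1)"
definition "kf x = (THE k. P x k)"
definition "k0 = (THE k::nat. False)"

lemma s_0: "s 0 = 0" by (simp add: iet_s_def)
lemma s_r: "s r = 1" using sum1 by (simp add: iet_s_def)
lemma s_Suc: "s (Suc k) = s k + l (Suc k)" by (simp add: iet_s_def)

lemma s_mono: "m \<le> m' \<Longrightarrow> m' \<le> r \<Longrightarrow> s m \<le> s m'"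
proof (induction m' rule: dec_induct)
  case base then show ?case by simp
next
  case (step n)
  have "l (Suc n) > 0" using pos step.prems by auto
  then show ?case using step by (simp add: s_Suc)
qed

lemma s_step: "1 \<le> k \<Longrightarrow> k \<le> r \<Longrightarrow> s k = s (k-1) + l k"
  using s_Suc[of "k-1"] by simp

lemma s_nonneg: "k \<le> r \<Longrightarrow> 0 \<le> s k" using s_mono[of 0 k] s_0 by simp
lemma s_le1: "k \<le> r \<Longrightarrow> s k \<le> 1" using s_mono[of k r] s_r by simp

lemma P_unique: assumes "P x k" "P x j" shows "k = j"
proof (rule ccontr)
  assume ne: "k \<noteq> j"
  have *: "\<not> (P x k \<and> P x j)" if "k < j" for k j
  proof
    assume h: "P x k \<and> P x j"
    then have "s k \<le> s (j-1)" using that by (intro s_mono) (auto simp: P_def)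
    then show False using h by (auto simp: P_def)
  qed
  from ne have "k < j \<or> j < k" by auto
  then show False using *[of k j] *[of j k] assms by auto
qed

lemma P_exists: assumes "0 \<le> x" "x < 1" shows "\<exists>k. P x k"
proof -
  define k where "k = (LEAST k. x < s k)"
  have ex: "x < s r" using s_r assms by simp
  have xk: "x < s k" unfolding k_def by (rule LeastI[of _ r]) (rule ex)
  have kr: "k \<le> r" unfolding k_def by (rule Least_le) (rule ex)
  have knz: "k \<noteq> 0" using xk s_0 assms by (cases k) auto
  have km: "k - 1 < k" using knz by simp
  have "\<not> x < s (k-1)" using not_less_Least[of "k-1" "\<lambda>k. x < s k"] km unfolding k_def by blast
  then show ?thesis using xk kr knz by (auto simp: P_def intro!: exI[of _ k])
qed

lemma kf_P: "0 \<le> x \<Longrightarrow> x < 1 \<Longrightarrow> P x (kf x)"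
  unfolding kf_def using P_exists P_unique by (metis theI)

lemma kf_eqI: "P x k \<Longrightarrow> kf x = k"
  unfolding kf_def using P_unique by blast

lemma T_eq: "T x = x + g (kf x)"
  by (simp add: T_def iet_def Let_def kf_def P_def g_def a_def)

lemma kf_range: "kf x \<in> {1..r} \<union> {k0}"
proof (cases "\<exists>k. P x k")
  case True
  then obtain k where "P x k" by blast
  then show ?thesis using kf_eqI by (auto simp: P_def)
next
  case False
  then have "(\<lambda>k. P x k) = (\<lambda>k. False)" by auto
  then show ?thesis by (simp add: kf_def k0_def)
qed

definition "Fset = g ` ({1..r} \<union> {k0})"
lemma Fset_finite: "finite Fset" by (simp add: Fset_def)
lemma T_diff: "T x - x \<in> Fset" using kf_range[of x] by (auto simp: T_eq Fset_def)

lemma a_nonneg: "0 \<le> a k" unfolding a_def using pos by (auto intro!: sum_nonneg intro: less_imp_le)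

lemma a_l_le: assumes "k \<in> {1..r}" shows "a k + l k \<le> 1"
proof -
  have "a k + l k = (\<Sum>i'\<in>insert k {i'\<in>{1..r}. p i' < p k}. l i')"
    by (simp add: a_def)
  also have "\<dots> \<le> (\<Sum>i\<in>{1..r}. l i)"
    using assms pos by (intro sum_mono2) (auto intro: less_imp_le)
  finally show ?thesis using sum1 by simp
qed

lemma a_l_le_a: assumes "k \<in> {1..r}" "j \<in> {1..r}" "p k < p j" shows "a k + l k \<le> a j"
proof -
  have "a k + l k = (\<Sum>i'\<in>insert k {i'\<in>{1..r}. p i' < p k}. l i')"
    by (simp add: a_def)
  also have "\<dots> \<le> a j"
    unfolding a_def using assms pos by (intro sum_mono2) (auto intro: less_imp_le)
  finally show ?thesis .
qed

lemma T_loc: assumes "0 \<le> x" "x < 1"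
  shows "a (kf x) \<le> T x" "T x < a (kf x) + l (kf x)"
proof -
  have h: "P x (kf x)" using kf_P assms by blast
  then have "s (kf x) = s (kf x - 1) + l (kf x)" by (intro s_step) (auto simp: P_def)
  then show "a (kf x) \<le> T x" "T x < a (kf x) + l (kf x)" using h
    by (auto simp: T_eq g_def P_def)
qed

lemma T_range: assumes "0 \<le> x" "x < 1" shows "0 \<le> T x" "T x < 1"
proof -
  have h: "kf x \<in> {1..r}" using kf_P[OF assms] by (auto simp: P_def)
  show "0 \<le> T x" using T_loc(1)[OF assms] a_nonneg[of "kf x"] by linarith
  show "T x < 1" using T_loc(2)[OF assms] a_l_le[OF h] by linarith
qed

lemma T_inj: "inj_on T {0..<1}"
proof (rule inj_onI)
  fix x y assume x: "x \<in> {0..<1}" and y: "y \<in> {0..<1}" and e: "T x = T y"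
  have hx: "kf x \<in> {1..r}" using kf_P x by (auto simp: P_def)
  have hy: "kf y \<in> {1..r}" using kf_P y by (auto simp: P_def)
  show "x = y"
  proof (cases "kf x = kf y")
    case True then show ?thesis using e by (simp add: T_eq)
  next
    case False
    then have "p (kf x) \<noteq> p (kf y)" using permutes_inj[OF perm] by (auto dest: injD)
    then have "p (kf x) < p (kf y) \<or> p (kf y) < p (kf x)" by auto
    then show ?thesis
    proof
      assume "p (kf x) < p (kf y)"
      from a_l_le_a[OF hx hy this] T_loc[of x] T_loc[of y] x y e show ?thesis by auto
    next
      assume "p (kf y) < p (kf x)"
      from a_l_le_a[OF hy hx this] T_loc[of x] T_loc[of y] x y e show ?thesis by auto
    qed
  qed
qed

lemma T_alt: "T x = x + (if 0 \<le> x \<and> x < 1 then (\<Sum>k\<in>{1..r}. indicator {s (k-1)..<s k} x * g k) else g k0)"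
proof (cases "0 \<le> x \<and> x < 1")
  case True
  then have h: "P x (kf x)" using kf_P by blast
  have "(\<Sum>k\<in>{1..r}. indicator {s (k-1)..<s k} x * g k) = (\<Sum>k\<in>{1..r}. if k = kf x then g k else 0)"
  proof (rule sum.cong)
    fix k assume k: "k \<in> {1..r}"
    show "indicator {s (k-1)..<s k} x * g k = (if k = kf x then g k else 0)"
    proof (cases "x \<in> {s (k-1)..<s k}")
      case True then have "P x k" using k by (auto simp: P_def)
      then show ?thesis using kf_eqI True by auto
    next
      case False then show ?thesis using h by (auto simp: P_def)
    qed
  qed simp
  also have "\<dots> = g (kf x)" using h by (auto simp: P_def)
  finally show ?thesis using True by (simp add: T_eq)
next
  case False
  have "\<not> P x k" for k
  proof
    assume "P x k"
    then have "0 \<le> s (k-1)" "s k \<le> 1" using s_nonneg s_le1 by (auto simp: P_def)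
    then show False using \<open>P x k\<close> False by (auto simp: P_def)
  qed
  then have "(\<lambda>k. P x k) = (\<lambda>k. False)" by auto
  then have "kf x = k0" by (simp add: kf_def k0_def)
  then show ?thesis using False by (subst if_not_P) (auto simp: T_eq)
qed

lemma T_meas: "T \<in> borel_measurable borel"
proof -
  have "T = (\<lambda>x. x + (if 0 \<le> x \<and> x < 1 then (\<Sum>k\<in>{1..r}. indicator {s (k-1)..<s k} x * g k) else g k0))"
    using T_alt by (rule ext)
  also have "\<dots> \<in> borel_measurable borel" by measurable
  finally show ?thesis .
qed

primrec Sset :: "nat \<Rightarrow> real set" where
  "Sset 0 = {0}"
| "Sset (Suc n) = (\<lambda>(u,v). u + v) ` (Sset n \<times> Fset)"

lemma Sset_finite: "finite (Sset n)"
  by (induction n) (auto simp: Fset_finite)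

lemma Tn_diff: "(T^^n) x - x \<in> Sset n"
proof (induction n)
  case 0 then show ?case by simp
next
  case (Suc n)
  have mem: "((T^^n) x - x, T ((T^^n) x) - (T^^n) x) \<in> Sset n \<times> Fset"
    using Suc T_diff by auto
  show ?case unfolding Sset.simps by (rule image_eqI[OF _ mem]) simp
qed

lemma Tn_range: "x \<in> {0..<1} \<Longrightarrow> (T^^n) x \<in> {0..<1}"
  by (induction n) (auto intro: T_range)

lemma Tn_inj: "inj_on (T^^n) {0..<1}"
proof (induction n)
  case 0 then show ?case by simp
next
  case (Suc n)
  have "inj_on (T \<circ> (T^^n)) {0..<1}"
    by (rule comp_inj_on[OF Suc]) (rule inj_on_subset[OF T_inj], use Tn_range in auto)
  then show ?case by (simp only: funpow.simps(2))
qed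

lemma Tn_meas: "(T^^n) \<in> borel_measurable borel"
proof (induction n)
  case 0 then show ?case by simp
next
  case (Suc n)
  have "T \<circ> (T^^n) \<in> borel_measurable borel" by (rule measurable_comp[OF Suc T_meas])
  then show ?case by (simp add: comp_def)
qed

lemma Delta_fin: "finite (Delta (T^^n))"
proof -
  have "Delta (T^^n) \<subseteq> frac ` Sset n"
    using Tn_diff by (auto simp: Delta_def msub_def)
  then show ?thesis using Sset_finite finite_subset by blast
qed

lemma Delta'_fin: "finite (Delta' (T^^n))"
proof -
  have "Delta' (T^^n) \<subseteq> (\<lambda>(u,v). msub u v) ` (Delta (T^^n) \<times> Delta (T^^n))"
    by (auto simp: Delta'_def)
  then show ?thesis using Delta_fin finite_subset by blast
qed

lemma D_fin: "finite (Delta'_n T N)"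
  unfolding Delta'_n_def using Delta'_fin by auto

lemma D_zero: "N \<ge> 1 \<Longrightarrow> 0 \<in> Delta'_n T N"
proof -
  assume N: "N \<ge> 1"
  have "msub (T 0) 0 \<in> Delta T" by (auto simp: Delta_def)
  then have "msub (msub (T 0) 0) (msub (T 0) 0) \<in> Delta' T" unfolding Delta'_def by blast
  then have "0 \<in> Delta' (T^^1)" by (simp add: msub_def)
  then show ?thesis using N unfolding Delta'_n_def by (intro UN_I[of 1]) auto
qed

lemma D_card: "N \<ge> 1 \<Longrightarrow> card (Delta'_n T N) \<ge> 1"
proof -
  assume N: "N \<ge> 1"
  have "Delta'_n T N \<noteq> {}" using D_zero[OF N] by blast
  then have "card (Delta'_n T N) > 0" using D_fin by (simp add: card_gt_0_iff)
  then show ?thesis by simp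
qed

lemma key_rel:
  assumes x: "x \<in> {0..<1}" and y: "y \<in> {0..<1}" and n: "1 \<le> n" "n \<le> N"
  shows "\<exists>d\<in>Delta'_n T N. dnint ((T^^n) x - (T^^n) y) = dnint (x - y + d)"
proof -
  define u where "u = msub ((T^^n) x) x"
  define v where "v = msub ((T^^n) y) y"
  have hu: "u \<in> Delta (T^^n)" using x unfolding Delta_def u_def by blast
  have hv: "v \<in> Delta (T^^n)" using y unfolding Delta_def v_def by blast
  have d0: "msub u v \<in> Delta' (T^^n)" unfolding Delta'_def
    by (rule CollectI, intro exI conjI, rule refl) (fact hu, fact hv)
  have d: "msub u v \<in> Delta'_n T N" using n d0 unfolding Delta'_n_def by (intro UN_I[of n]) auto
  have e1: "msub u v = u - v - of_int \<lfloor>u - v\<rfloor>" by (simp add: msub_def frac_def)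
  have e2: "u = (T^^n) x - x - of_int \<lfloor>(T^^n) x - x\<rfloor>" by (simp add: u_def msub_def frac_def)
  have e3: "v = (T^^n) y - y - of_int \<lfloor>(T^^n) y - y\<rfloor>" by (simp add: v_def msub_def frac_def)
  have "x - y + msub u v = ((T^^n) x - (T^^n) y) + of_int (- \<lfloor>(T^^n) x - x\<rfloor> + \<lfloor>(T^^n) y - y\<rfloor> - \<lfloor>u - v\<rfloor>)"
    unfolding of_int_add of_int_diff of_int_minus using e1 e2 e3 by linarith
  then have "dnint (x - y + msub u v) = dnint ((T^^n) x - (T^^n) y)"
    by (simp only: dnint_add_int)
  then show ?thesis using d by (intro bexI[of _ "msub u v"]) auto
qed

end



lemma emeasure_translate:
  fixes A :: "real set" assumes A: "A \<in> sets borel"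
  shows "emeasure lborel {z. c + z \<in> A} = emeasure lborel A"
proof -
  have "emeasure lborel A = emeasure (distr lborel borel ((+) c)) A" by (simp add: lborel_distr_plus)
  also have "\<dots> = emeasure lborel ((+) c -` A \<inter> space lborel)"
    by (rule emeasure_distr) (use A in auto)
  also have "(+) c -` A \<inter> space lborel = {z. c + z \<in> A}" by auto
  finally show ?thesis by simp
qed

lemma emeasure_translate':
  fixes A :: "real set" assumes A: "A \<in> sets borel"
  shows "emeasure lborel {z. z - c \<in> A} = emeasure lborel A"
proof -
  have "{z. z - c \<in> A} = {z. (-c) + z \<in> A}" by auto
  then show ?thesis using emeasure_translate[OF A, of "-c"] by simp
qed

lemma arc_bound:
  fixes a \<epsilon> :: real assumes e: "\<epsilon> > 0"
  shows "emeasure lborel {v\<in>{0..<1}. dnint (a - v) < \<epsilon>} \<le> ennreal (6 * \<epsilon>)"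
proof -
  define f where "f = \<lfloor>a\<rfloor>"
  define I where "I m = {a - of_int m - \<epsilon> <..< a - of_int m + \<epsilon>}" for m :: int
  have sub: "{v\<in>{0..<1}. dnint (a - v) < \<epsilon>} \<subseteq> (\<Union>m\<in>{f-1..f+1}. I m)"
  proof
    fix v assume v: "v \<in> {v\<in>{0..<1}. dnint (a - v) < \<epsilon>}"
    define m where "m = round (a - v)"
    have h1: "\<bar>a - v - of_int m\<bar> < \<epsilon>" using v by (simp add: dnint_def m_def)
    have h2: "\<bar>of_int m - (a - v)\<bar> \<le> 1/2" unfolding m_def by (rule of_int_round_abs_le)
    have fl: "of_int f \<le> a" "a < of_int f + 1" unfolding f_def by linarith+
    have h2': "a - v - 1/2 \<le> of_int m" "of_int m \<le> a - v + 1/2" using h2 unfolding abs_le_iff by linarith+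
    have "of_int (m - (f - 2)) > (0::real)" unfolding of_int_diff using h2' fl v by simp
    then have m1: "f - 1 \<le> m" by linarith
    have "of_int ((f + 2) - m) > (0::real)" unfolding of_int_diff of_int_add using h2' fl v by simp
    then have m2: "m \<le> f + 1" by linarith
    have "v \<in> I m" using h1 unfolding I_def by (auto simp: abs_less_iff)
    then show "v \<in> (\<Union>m\<in>{f-1..f+1}. I m)" using m1 m2 by auto
  qed
  have "emeasure lborel {v\<in>{0..<1}. dnint (a - v) < \<epsilon>} \<le> emeasure lborel (\<Union>m\<in>{f-1..f+1}. I m)"
    by (rule emeasure_mono[OF sub]) (auto simp: I_def)
  also have "\<dots> \<le> (\<Sum>m\<in>{f-1..f+1}. emeasure lborel (I m))"
    by (rule emeasure_subadditive_finite) (auto simp: I_def)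
  also have "\<dots> = (\<Sum>m\<in>{f-1..f+1}. ennreal (2 * \<epsilon>))"
    using e by (intro sum.cong) (auto simp: I_def)
  also have "\<dots> = ennreal (6 * \<epsilon>)"
  proof -
    have "card {f-1..f+1} = 3" by simp
    moreover have "ennreal (6 * \<epsilon>) = ennreal 3 * ennreal (2 * \<epsilon>)"
      using e by (subst ennreal_mult[symmetric]) auto
    ultimately show ?thesis by simp
  qed
  finally show ?thesis .
qed

lemma push_bound:
  fixes f :: "real \<Rightarrow> real" and C B :: "real set"
  assumes fm: "f \<in> borel_measurable borel" and inj: "inj_on f {0..<1}"
    and rng: "\<And>y. y \<in> {0..<1} \<Longrightarrow> f y \<in> {0..<1}"
    and C: "finite C" and dif: "\<And>y. f y - y \<in> C" and B: "B \<in> sets borel"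
  shows "emeasure lborel {y\<in>{0..<1}. f y \<in> B} \<le> emeasure lborel {v\<in>{0..<1}. v \<in> B}"
proof -
  define A where "A c = {y\<in>{0..<1}. f y - y = c \<and> f y \<in> B}" for c
  define D where "D c = {z. z - c \<in> A c}" for c
  have Am: "A c \<in> sets borel" for c
    unfolding A_def using fm B by measurable
  have "{y\<in>{0..<1}. f y \<in> B} = (\<Union>c\<in>C. A c)" using dif by (auto simp: A_def)
  then have "emeasure lborel {y\<in>{0..<1}. f y \<in> B} \<le> (\<Sum>c\<in>C. emeasure lborel (A c))"
    using emeasure_subadditive_finite[OF C, of A lborel] Am by auto
  also have "\<dots> = (\<Sum>c\<in>C. emeasure lborel (D c))"
    unfolding D_def using emeasure_translate'[OF Am] by simp
  also have "\<dots> = emeasure lborel (\<Union>c\<in>C. D c)"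
  proof (rule sum_emeasure)
    show "D ` C \<subseteq> sets lborel" unfolding D_def using Am by auto
    show "disjoint_family_on D C"
    unfolding disjoint_family_on_def
    proof (intro ballI impI)
      fix c c' assume "c \<in> C" "c' \<in> C" "c \<noteq> c'"
      show "D c \<inter> D c' = {}"
      proof (rule ccontr)
        assume "D c \<inter> D c' \<noteq> {}"
        then obtain z where z: "z \<in> D c" "z \<in> D c'" by blast
        then have y1: "z - c \<in> {0..<1}" "f (z - c) = z" and y2: "z - c' \<in> {0..<1}" "f (z - c') = z"
          by (auto simp: D_def A_def)
        then have "z - c = z - c'" using inj by (metis inj_onD)
        then show False using \<open>c \<noteq> c'\<close> by simp
      qed
    qed
  qed (rule C)
  also have "\<dots> \<le> emeasure lborel {v\<in>{0..<1}. v \<in> B}"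
  proof (rule emeasure_mono)
    show "(\<Union>c\<in>C. D c) \<subseteq> {v\<in>{0..<1}. v \<in> B}"
    proof
      fix z assume "z \<in> (\<Union>c\<in>C. D c)"
      then obtain c where "z - c \<in> {0..<1}" "f (z - c) - (z - c) = c" "f (z - c) \<in> B"
        by (auto simp: D_def A_def)
      then show "z \<in> {v\<in>{0..<1}. v \<in> B}" using rng[of "z - c"] by auto
    qed
    show "{v\<in>{0..<1}. v \<in> B} \<in> sets lborel" using B by auto
  qed
  finally show ?thesis .
qed




abbreviation "MU \<equiv> restrict_space lborel {0..<1::real}"
abbreviation "PP \<equiv> MU \<Otimes>\<^sub>M MU"

lemma MU_space[simp]: "space MU = {0..<1}" by (simp add: space_restrict_space)
lemma PP_space[simp]: "space PP = {0..<1} \<times> {0..<1}" by (simp add: space_pair_measure)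

lemma MU_emeasure: "A \<subseteq> {0..<1} \<Longrightarrow> emeasure MU A = emeasure lborel A"
  by (rule emeasure_restrict_space) auto

lemma MU_fin_aux: "emeasure MU (space MU) = 1"
  using MU_emeasure[of "{0..<1}"] by simp

lemma MU_finite: "finite_measure MU"
  by (rule finite_measureI) (use MU_fin_aux in simp)

interpretation MU: finite_measure MU by (rule MU_finite)

lemma PP_one: "emeasure PP (space PP) = 1"
proof -
  have "emeasure PP ({0..<1} \<times> {0..<1}) = emeasure MU {0..<1} * emeasure MU {0..<1}"
    by (rule MU.emeasure_pair_measure_Times) (metis sets.top MU_space)+
  then show ?thesis using MU_fin_aux by simp
qed

lemma meas_MU: "f \<in> borel_measurable borel \<Longrightarrow> f \<in> borel_measurable MU"
  by (rule measurable_restrict_space1) simp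

lemma id_MU: "(\<lambda>x. x) \<in> borel_measurable MU" by (rule meas_MU) simp

lemma fst_PP[measurable]: "fst \<in> borel_measurable PP"
  by (rule measurable_compose[OF measurable_fst id_MU])

lemma snd_PP[measurable]: "snd \<in> borel_measurable PP"
  by (rule measurable_compose[OF measurable_snd id_MU])

lemma dnint_meas[measurable]: "dnint \<in> borel_measurable borel"
  unfolding dnint_def round_def by measurable

lemma PP_bound:
  assumes G: "{\<omega>\<in>space PP. Q \<omega>} \<in> sets PP"
    and b: "\<And>x. x \<in> {0..<1} \<Longrightarrow> emeasure lborel {y\<in>{0..<1}. Q (x, y)} \<le> e"
  shows "emeasure PP {\<omega>\<in>space PP. Q \<omega>} \<le> e"
proof -
  have "emeasure PP {\<omega>\<in>space PP. Q \<omega>} = (\<integral>\<^sup>+x. emeasure MU (Pair x -` {\<omega>\<in>space PP. Q \<omega>}) \<partial>MU)"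
    by (rule MU.emeasure_pair_measure_alt[OF G])
  also have "\<dots> \<le> (\<integral>\<^sup>+x. e \<partial>MU)"
  proof (rule nn_integral_mono)
    fix x assume x: "x \<in> space MU"
    have "Pair x -` {\<omega>\<in>space PP. Q \<omega>} = {y\<in>{0..<1}. Q (x, y)}" using x by auto
    have sub: "{y\<in>{0..<1}. Q (x, y)} \<subseteq> {0..<1}" by auto
    show "emeasure MU (Pair x -` {\<omega>\<in>space PP. Q \<omega>}) \<le> e"
      unfolding \<open>Pair x -` {\<omega>\<in>space PP. Q \<omega>} = {y\<in>{0..<1}. Q (x, y)}\<close> MU_emeasure[OF sub]
      using b[of x] x by simp
  qed
  also have "\<dots> = e" using MU_fin_aux by simp
  finally show ?thesis .
qed

lemma no_AE:
  fixes f :: "real \<Rightarrow> real" and \<alpha> :: real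
  assumes G: "\<And>n. G n \<in> sets PP" and sm: "summable (\<lambda>n. measure PP (G n))"
    and H: "\<And>\<omega>. \<omega> \<in> space PP \<Longrightarrow> eventually (\<lambda>n. \<omega> \<notin> G n) sequentially \<Longrightarrow>
        eventually (\<lambda>n. 1 \<le> real n powr \<alpha> * dnint ((f ^^ n) (fst \<omega>) - (f ^^ n) (snd \<omega>))) sequentially"
  shows "\<not> (AE \<omega> in PP. liminf (\<lambda>n. ereal (real n powr \<alpha> * dnint ((f ^^ n) (fst \<omega>) - (f ^^ n) (snd \<omega>)))) = 0)"
proof
  assume A: "AE \<omega> in PP. liminf (\<lambda>n. ereal (real n powr \<alpha> * dnint ((f ^^ n) (fst \<omega>) - (f ^^ n) (snd \<omega>)))) = 0"
  have fin: "emeasure PP (G n) < \<infinity>" for n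
  proof -
    have "emeasure PP (G n) \<le> emeasure PP (space PP)" by (rule emeasure_space)
    then show ?thesis using PP_one by (simp add: le_less_trans)
  qed
  have B: "AE \<omega> in PP. eventually (\<lambda>n. \<omega> \<in> space PP - G n) sequentially"
    by (rule borel_cantelli_AE1[OF G fin sm])
  have "AE \<omega> in PP. False"
    using A B AE_space
  proof eventually_elim
    case (elim \<omega>)
    have "eventually (\<lambda>n. \<omega> \<notin> G n) sequentially" using elim(2) by (auto elim: eventually_mono)
    then have "eventually (\<lambda>n. 1 \<le> real n powr \<alpha> * dnint ((f ^^ n) (fst \<omega>) - (f ^^ n) (snd \<omega>))) sequentially"
      using H elim(3) by blast
    then have "eventually (\<lambda>n. ereal 1 \<le> ereal (real n powr \<alpha> * dnint ((f ^^ n) (fst \<omega>) - (f ^^ n) (snd \<omega>)))) sequentially"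
      by (auto elim: eventually_mono)
    then have "ereal 1 \<le> liminf (\<lambda>n. ereal (real n powr \<alpha> * dnint ((f ^^ n) (fst \<omega>) - (f ^^ n) (snd \<omega>))))"
      by (rule Liminf_bounded)
    then show False using elim(1) by simp
  qed
  then obtain N where "{x \<in> space PP. \<not> False} \<subseteq> N" "emeasure PP N = 0" "N \<in> sets PP"
    by (rule AE_E)
  then have "emeasure PP (space PP) \<le> 0" by (metis emeasure_mono mem_Collect_eq subsetI subset_eq)
  then show False using PP_one by simp
qed

lemma C_psi_le:
  fixes b :: ereal
  assumes b0: "0 \<le> b"
    and H: "\<And>\<alpha>. \<alpha> > 0 \<Longrightarrow> ereal \<alpha> > b \<Longrightarrow>
      \<not> (AE \<omega> in PP. liminf (\<lambda>n. ereal (real n powr \<alpha> * dnint ((f ^^ n) (fst \<omega>) - (f ^^ n) (snd \<omega>)))) = 0)"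
  shows "C_psi f \<le> b"
  unfolding C_psi_def
proof (rule Sup_least)
  fix z assume "z \<in> {0} \<union> ereal ` {\<alpha>. 0 < \<alpha> \<and> (AE \<omega> in PP. liminf (\<lambda>n. ereal (real n powr \<alpha> * dnint ((f ^^ n) (fst \<omega>) - (f ^^ n) (snd \<omega>)))) = 0)}"
  then show "z \<le> b" using b0 H not_le by fastforce
qed




lemma measure_le_of_emeasure:
  "emeasure M A \<le> ennreal c \<Longrightarrow> 0 \<le> c \<Longrightarrow> measure M A \<le> c"
  unfolding measure_def by (rule enn2real_leI)

context ietc begin

lemma Tn_MU[measurable]: "(T^^n) \<in> borel_measurable MU"
  by (rule meas_MU[OF Tn_meas])

lemma main1:
  assumes a1: "\<alpha> > 1"
  shows "\<not> (AE \<omega> in PP. liminf (\<lambda>n. ereal (real n powr \<alpha> * dnint ((T ^^ n) (fst \<omega>) - (T ^^ n) (snd \<omega>)))) = 0)"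
proof -
  define \<beta> where "\<beta> = (1 + \<alpha>) / 2"
  have b1: "\<beta> > 1" "\<beta> < \<alpha>" using a1 by (auto simp: \<beta>_def)
  define G where "G n = {\<omega>\<in>space PP. dnint ((T^^n) (fst \<omega>) - (T^^n) (snd \<omega>)) < real n powr (-\<beta>)}" for n
  have Gm: "G n \<in> sets PP" for n unfolding G_def by measurable
  have Gb: "emeasure PP (G n) \<le> ennreal (6 * real n powr (-\<beta>))" for n
    unfolding G_def
  proof (rule PP_bound)
    show "{\<omega>\<in>space PP. dnint ((T^^n) (fst \<omega>) - (T^^n) (snd \<omega>)) < real n powr (-\<beta>)} \<in> sets PP"
      using Gm unfolding G_def .
    fix x :: real assume x: "x \<in> {0..<1}"
    show "emeasure lborel {y\<in>{0..<1}. dnint ((T^^n) (fst (x, y)) - (T^^n) (snd (x, y))) < real n powr (-\<beta>)}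
          \<le> ennreal (6 * real n powr (-\<beta>))"
    proof (cases "n = 0")
      case True
      have "dnint t \<ge> 0" for t by (simp add: dnint_def)
      then have "{y\<in>{0..<1}. dnint ((T^^n) (fst (x, y)) - (T^^n) (snd (x, y))) < real n powr (-\<beta>)} = {}"
        using True by (auto simp: not_less)
      then show ?thesis by (metis emeasure_empty zero_le)
    next
      case False
      define B where "B = {v. dnint ((T^^n) x - v) < real n powr (-\<beta>)}"
      have Bm: "B \<in> sets borel" unfolding B_def by measurable
      have "emeasure lborel {y\<in>{0..<1}. (T^^n) y \<in> B} \<le> emeasure lborel {v\<in>{0..<1}. v \<in> B}"
        by (rule push_bound[OF Tn_meas Tn_inj Tn_range Sset_finite Tn_diff Bm])
      also have "\<dots> \<le> ennreal (6 * real n powr (-\<beta>))"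
        unfolding B_def mem_Collect_eq using False by (intro arc_bound) simp
      finally show ?thesis by (simp add: B_def)
    qed
  qed
  have meas_b: "measure PP (G n) \<le> 6 * real n powr (-\<beta>)" for n
    by (rule measure_le_of_emeasure[OF Gb]) simp
  have sm: "summable (\<lambda>n. measure PP (G n))"
  proof (rule summable_comparison_test')
    show "summable (\<lambda>n. 6 * real n powr (-\<beta>))"
      using b1 by (intro summable_mult) (simp add: summable_real_powr_iff)
    show "norm (measure PP (G n)) \<le> 6 * real n powr (-\<beta>)" for n
      using meas_b[of n] by simp
  qed
  show ?thesis
  proof (rule no_AE[OF Gm sm])
    fix \<omega> assume \<omega>: "\<omega> \<in> space PP" and ev: "eventually (\<lambda>n. \<omega> \<notin> G n) sequentially"
    show "eventually (\<lambda>n. 1 \<le> real n powr \<alpha> * dnint ((T ^^ n) (fst \<omega>) - (T ^^ n) (snd \<omega>))) sequentially"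
      using ev eventually_ge_at_top[of "1::nat"]
    proof eventually_elim
      case (elim n)
      then have d: "dnint ((T ^^ n) (fst \<omega>) - (T ^^ n) (snd \<omega>)) \<ge> real n powr (-\<beta>)"
        using \<omega> by (auto simp: G_def not_less)
      have np: "real n > 0" using elim by simp
      have "1 \<le> real n powr (\<alpha> - \<beta>)" using elim b1 by (intro ge_one_powr_ge_zero) auto
      also have "\<dots> = real n powr \<alpha> * real n powr (-\<beta>)" by (simp add: powr_add[symmetric])
      also have "\<dots> \<le> real n powr \<alpha> * dnint ((T ^^ n) (fst \<omega>) - (T ^^ n) (snd \<omega>))"
        using d by (intro mult_left_mono) auto
      finally show ?case .
    qed
  qed
qed

lemma tau_nonneg: "tau_entropy T \<ge> 0"
  unfolding tau_entropy_def
proof (rule le_Limsup)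
  show "eventually (\<lambda>n. 0 \<le> ereal (ln (real (card (Delta'_n T n))) / ln (real n))) sequentially"
    using eventually_ge_at_top[of "1::nat"]
  proof eventually_elim
    case (elim n)
    then have "real (card (Delta'_n T n)) \<ge> 1" using D_card by simp
    then show ?case using elim by (auto intro!: divide_nonneg_nonneg)
  qed
qed simp

lemma card_bound:
  assumes "tau_entropy T < ereal \<gamma>"
  shows "eventually (\<lambda>N. real (card (Delta'_n T N)) \<le> real N powr \<gamma>) sequentially"
proof -
  have "eventually (\<lambda>N. ereal (ln (real (card (Delta'_n T N))) / ln (real N)) < ereal \<gamma>) sequentially"
    using assms unfolding tau_entropy_def by (rule Limsup_lessD)
  then show ?thesis using eventually_ge_at_top[of "2::nat"]
  proof eventually_elim
    case (elim N)
    have c1: "real (card (Delta'_n T N)) \<ge> 1" using D_card elim by simp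
    have lnN: "ln (real N) > 0" using elim by simp
    have "ln (real (card (Delta'_n T N))) < \<gamma> * ln (real N)"
      using elim lnN by (simp add: divide_less_eq)
    then have "exp (ln (real (card (Delta'_n T N)))) \<le> exp (\<gamma> * ln (real N))" by simp
    then show ?case using c1 elim by (simp add: powr_def)
  qed
qed

lemma main2:
  assumes a0: "\<alpha> > 0" and at: "ereal \<alpha> > tau_entropy T"
  shows "\<not> (AE \<omega> in PP. liminf (\<lambda>n. ereal (real n powr \<alpha> * dnint ((T ^^ n) (fst \<omega>) - (T ^^ n) (snd \<omega>)))) = 0)"
proof -
  obtain \<gamma> where g1: "tau_entropy T < ereal \<gamma>" and g2: "ereal \<gamma> < ereal \<alpha>"
    using ereal_dense2[OF at] by blast
  have "ereal 0 < ereal \<gamma>" using tau_nonneg g1 by (metis zero_ereal_def order.strict_trans1)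
  then have g0: "\<gamma> \<ge> 0" by simp
  have ga: "\<gamma> < \<alpha>" using g2 by simp
  define \<beta> where "\<beta> = (\<gamma> + \<alpha>) / 2"
  have b1: "\<gamma> < \<beta>" "\<beta> < \<alpha>" "\<beta> > 0" using ga g0 by (auto simp: \<beta>_def)
  define D where "D k = Delta'_n T (2^(k+1))" for k
  define \<epsilon> where "\<epsilon> k = 2 powr (- \<beta> * real k)" for k
  have ep: "\<epsilon> k > 0" for k by (simp add: \<epsilon>_def)
  have Dfin: "finite (D k)" for k by (simp add: D_def D_fin)
  define G where "G k = {\<omega>\<in>space PP. \<exists>d\<in>D k. dnint (fst \<omega> - snd \<omega> + d) < \<epsilon> k}" for k
  have Gm: "G k \<in> sets PP" for k
    unfolding G_def using Dfin[of k] by measurable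
  have arcm: "{v\<in>{0..<1}. dnint (a - v) < e} \<in> sets lborel" for a e :: real
    by measurable
  have Gb: "emeasure PP (G k) \<le> ennreal (real (card (D k)) * (6 * \<epsilon> k))" for k
    unfolding G_def
  proof (rule PP_bound)
    show "{\<omega>\<in>space PP. \<exists>d\<in>D k. dnint (fst \<omega> - snd \<omega> + d) < \<epsilon> k} \<in> sets PP"
      using Gm unfolding G_def .
    fix x :: real assume x: "x \<in> {0..<1}"
    have "{y\<in>{0..<1}. \<exists>d\<in>D k. dnint (fst (x, y) - snd (x, y) + d) < \<epsilon> k}
        \<subseteq> (\<Union>d\<in>D k. {v\<in>{0..<1}. dnint ((x + d) - v) < \<epsilon> k})"
      by (auto simp: algebra_simps)
    then have "emeasure lborel {y\<in>{0..<1}. \<exists>d\<in>D k. dnint (fst (x, y) - snd (x, y) + d) < \<epsilon> k}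
        \<le> emeasure lborel (\<Union>d\<in>D k. {v\<in>{0..<1}. dnint ((x + d) - v) < \<epsilon> k})"
      by (rule emeasure_mono) (use Dfin arcm in auto)
    also have "\<dots> \<le> (\<Sum>d\<in>D k. emeasure lborel {v\<in>{0..<1}. dnint ((x + d) - v) < \<epsilon> k})"
      by (rule emeasure_subadditive_finite[OF Dfin]) (use arcm in auto)
    also have "\<dots> \<le> (\<Sum>d\<in>D k. ennreal (6 * \<epsilon> k))"
      by (intro sum_mono arc_bound ep)
    also have "\<dots> = ennreal (real (card (D k)) * (6 * \<epsilon> k))"
      using ep[of k] by (simp add: ennreal_mult ennreal_of_nat_eq_real_of_nat)
    finally show "emeasure lborel {y\<in>{0..<1}. \<exists>d\<in>D k. dnint (fst (x, y) - snd (x, y) + d) < \<epsilon> k}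
        \<le> ennreal (real (card (D k)) * (6 * \<epsilon> k))" .
  qed
  have meas_b: "measure PP (G k) \<le> real (card (D k)) * (6 * \<epsilon> k)" for k
    by (rule measure_le_of_emeasure[OF Gb]) (use ep[of k] in simp)
  obtain N0 where N0: "\<And>N. N \<ge> N0 \<Longrightarrow> real (card (Delta'_n T N)) \<le> real N powr \<gamma>"
    using card_bound[OF g1] unfolding eventually_sequentially by blast
  have geo: "real (card (D k)) * (6 * \<epsilon> k) \<le> 6 * 2 powr \<gamma> * (2 powr (\<gamma> - \<beta>)) ^ k" if k: "k \<ge> N0" for k
  proof -
    have "N0 \<le> k" using k .
    also have "k < 2^k" by (rule less_exp)
    also have "(2::nat)^k \<le> 2^(k+1)" by simp
    finally have "real (card (D k)) \<le> real (2^(k+1)) powr \<gamma>" unfolding D_def by (intro N0) simp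
    also have "real (2^(k+1)) = 2 powr (real k + 1)"
      using powr_realpow[of 2 "k+1"] by (simp add: add.commute)
    finally have c: "real (card (D k)) \<le> (2 powr (real k + 1)) powr \<gamma>" .
    have "real (card (D k)) * (6 * \<epsilon> k) \<le> (2 powr (real k + 1)) powr \<gamma> * (6 * \<epsilon> k)"
      using c ep[of k] by (intro mult_right_mono) auto
    also have "\<dots> = 6 * 2 powr \<gamma> * 2 powr ((\<gamma> - \<beta>) * real k)"
      unfolding \<epsilon>_def powr_powr by (simp add: powr_add[symmetric] algebra_simps)
    also have "2 powr ((\<gamma> - \<beta>) * real k) = (2 powr (\<gamma> - \<beta>)) ^ k"
      using powr_realpow[of "2 powr (\<gamma> - \<beta>)" k] by (simp add: powr_powr)
    finally show ?thesis by simp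
  qed
  have sm: "summable (\<lambda>k. measure PP (G k))"
  proof (rule summable_comparison_test')
    show "summable (\<lambda>k. 6 * 2 powr \<gamma> * (2 powr (\<gamma> - \<beta>)) ^ k)"
      using b1 by (intro summable_mult summable_geometric) (simp add: powr_less_one)
    show "norm (measure PP (G k)) \<le> 6 * 2 powr \<gamma> * (2 powr (\<gamma> - \<beta>)) ^ k" if "k \<ge> N0" for k
      using meas_b[of k] geo[OF that] by simp
  qed
  show ?thesis
  proof (rule no_AE[OF Gm sm])
    fix \<omega> assume \<omega>: "\<omega> \<in> space PP" and ev: "eventually (\<lambda>k. \<omega> \<notin> G k) sequentially"
    obtain K where K: "\<And>k. k \<ge> K \<Longrightarrow> \<omega> \<notin> G k" using ev unfolding eventually_sequentially by blast
    show "eventually (\<lambda>n. 1 \<le> real n powr \<alpha> * dnint ((T ^^ n) (fst \<omega>) - (T ^^ n) (snd \<omega>))) sequentially"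
      unfolding eventually_sequentially
    proof (intro exI allI impI)
      fix n :: nat assume n: "n \<ge> 2^K"
      have "(1::nat) \<le> 2^K" by simp
      then have n1: "n \<ge> 1" using n by linarith
      obtain k where k: "2^k \<le> n" "n < 2^(k+1)" using ex_power_ivl1[of 2 n] n1 by auto
      have kK: "k \<ge> K"
      proof (rule ccontr)
        assume "\<not> k \<ge> K"
        then have "(2::nat)^(k+1) \<le> 2^K" by (intro power_increasing) auto
        then show False using k n by linarith
      qed
      obtain d where d: "d \<in> D k" "dnint ((T^^n) (fst \<omega>) - (T^^n) (snd \<omega>)) = dnint (fst \<omega> - snd \<omega> + d)"
        using key_rel[of "fst \<omega>" "snd \<omega>" n "2^(k+1)"] \<omega> n1 k unfolding D_def by auto
      have ge: "dnint ((T^^n) (fst \<omega>) - (T^^n) (snd \<omega>)) \<ge> \<epsilon> k"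
        using K[OF kK] \<omega> d by (auto simp: G_def not_less)
      have "real n powr (-\<beta>) \<le> real (2^k) powr (-\<beta>)"
        using k b1 by (intro powr_mono2') auto
      also have "real (2^k) = 2 powr real k" by (subst powr_realpow) auto
      also have "(2 powr real k) powr (-\<beta>) = \<epsilon> k" by (simp add: \<epsilon>_def powr_powr mult.commute)
      finally have nb: "real n powr (-\<beta>) \<le> dnint ((T^^n) (fst \<omega>) - (T^^n) (snd \<omega>))" using ge by simp
      have "1 \<le> real n powr (\<alpha> - \<beta>)" using n1 b1 by (intro ge_one_powr_ge_zero) auto
      also have "\<dots> = real n powr \<alpha> * real n powr (-\<beta>)" by (simp add: powr_add[symmetric])
      also have "\<dots> \<le> real n powr \<alpha> * dnint ((T ^^ n) (fst \<omega>) - (T ^^ n) (snd \<omega>))"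
        using nb by (intro mult_left_mono) auto
      finally show "1 \<le> real n powr \<alpha> * dnint ((T ^^ n) (fst \<omega>) - (T ^^ n) (snd \<omega>))" .
    qed
  qed
qed

end

theorem theorem11p3:
  fixes r :: nat and p :: "nat \<Rightarrow> nat" and l :: "nat \<Rightarrow> real"
  assumes "r \<ge> 1"
    and "p permutes {1..r}"
    and "\<forall>i\<in>{1..r}. l i > 0"
    and "(\<Sum>i\<in>{1..r}. l i) = 1"
  shows "C_psi (iet r p l) \<le> min 1 (tau_entropy (iet r p l))
     \<and> (tau_entropy (iet r p l) = 0 \<longrightarrow> C_psi (iet r p l) = 0)"
proof -
  interpret ietc r p l using assms by unfold_locales
  have TT: "iet r p l = T" by (simp add: T_def)
  have c1: "C_psi T \<le> 1"
  proof (rule C_psi_le)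
    fix \<alpha> :: real assume "\<alpha> > 0" "ereal \<alpha> > 1"
    then have "\<alpha> > 1" by simp
    then show "\<not> (AE \<omega> in PP. liminf (\<lambda>n. ereal (real n powr \<alpha> * dnint ((T ^^ n) (fst \<omega>) - (T ^^ n) (snd \<omega>)))) = 0)"
      by (rule main1)
  qed simp
  have c2: "C_psi T \<le> tau_entropy T"
    by (rule C_psi_le[OF tau_nonneg]) (rule main2)
  have c0: "C_psi T \<ge> 0" unfolding C_psi_def by (rule Sup_upper) simp
  show ?thesis unfolding TT using c0 c1 c2 by (auto intro: antisym)
qed

end
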